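(* Let $H=(V,E)$ be a hypergraph whose vertex set $V$ is a partition of $[n]$ into sets of cardinality at least $2$. Choose $\bar i_I\in I$ for each $I\in V$ and let $R=\{\bar i_I\}_{I\in V}$, and let $\mathcal{J}^H|_R=\{J\in\mathcal{J}^H: J\subseteq R\}$. Then the map $J\mapsto E(J)$ is a bijection from $\mathcal{J}^H|_R$ onto $L(V)\cup E$, and the linear map $w\mapsto z$ defined by $z_{E(J)}=w_J$ for all $J\in\mathcal{J}^H|_R$ is a one-to-one correspondence between $\operatorname{proj}_{\mathcal{J}^H|_R}\mathrm{MC}^H$ and $\mathrm{MP}^H$.
   Context: Let $n$ be a positive integer, $[n]=\{1,\dots,n\}$. A hypergraph $H=(V,E)$ here has as vertex set $V$ a family of pairwise disjoint subsets of $[n]$, each of cardinality at least $2$, and hyperedge set $E$ consisting of subsets $e\subseteq V$ with $|e|\ge 2$. Write $L(V)=\{\{I\}: I\in V\}$. For a nonempty $e\subseteq V$, $\mathcal{J}^e$ denotes the family of sets $J\subseteq \bigcup_{I\in e} I$ with $|J\cap I|=1$ for every $I\in e$. Let $\mathcal{J}^H=\bigcup_{e\in L(V)\cup E}\mathcal{J}^e$. For $J$ with $|J\cap I|\le 1$ for all $I\in V$, $E(J)=\{I\in V: |J\cap I|=1\}$. For $w\in\mathbb{R}^{\mathcal{J}^H}$ write $w_i=w_{\{i\}}$ and $w(A)=\sum_{i\in A}w_i$. Let $\mathscr{S}^H=\{w\in\{0,1\}^{\mathcal{J}^H}: w(I)=1\ \forall I\in V;\ w_J=\prod_{i\in J}w_i\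 \forall J\in\mathcal{J}^H, |J|>1\}$ and $\mathrm{MC}^H=\operatorname{conv}\mathscr{S}^H$. The multilinear set is $\mathcal{S}^H=\{z\in\{0,1\}^{L(V)\cup E}: z_e=\prod_{I\in e}z_I\ \forall e\in E\}$, with $z_I=z_{\{I\}}$, and $\mathrm{MP}^H=\operatorname{conv}\mathcal{S}^H$. For a finite index set $S'\subseteq S$, $\operatorname{proj}_{S'}$ extracts the coordinates indexed by $S'$ (applied elementwise to sets). *)

theory Defs
  imports "HOL-Analysis.Analysis"
begin

(* Points of R^S (S a finite index set) are represented as functions S-type => real,
   taking the value 0 outside the index set S. *)

definition conv_fun :: "('a \<Rightarrow> real) set \<Rightarrow> ('a \<Rightarrow> real) set" where
  "conv_fun S = {x. \<exists>(k::nat) (u::nat \<Rightarrow> real) (p::nat \<Rightarrow> 'a \<Rightarrow> real).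
      (\<forall>i<k. 0 \<le> u i \<and> p i \<in> S) \<and> (\<Sum>i<k. u i) = 1 \<and> x = (\<lambda>j. \<Sum>i<k. u i * p i j)}"

definition proj_on :: "'a set \<Rightarrow> ('a \<Rightarrow> real) \<Rightarrow> ('a \<Rightarrow> real)" where
  "proj_on S' w = (\<lambda>J. if J \<in> S' then w J else 0)"

definition partition_vertices :: "nat \<Rightarrow> nat set set \<Rightarrow> bool" where
  "partition_vertices n V \<longleftrightarrow> \<Union>V = {1..n} \<and>
     (\<forall>I\<in>V. \<forall>I'\<in>V. I \<noteq> I' \<longrightarrow> I \<inter> I' = {}) \<and> (\<forall>I\<in>V. 2 \<le> card I)"

definition hyperedges_ok :: "nat set set \<Rightarrow> nat set set set \<Rightarrow> bool" where
  "hyperedges_ok V E \<longleftrightarrow> (\<forall>e\<in>E. e \<subseteq> V \<and> 2 \<le> card e)"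

definition Lv :: "nat set set \<Rightarrow> nat set set set" where
  "Lv V = {{I} | I. I \<in> V}"

definition Jfam :: "nat set set \<Rightarrow> nat set set" where
  "Jfam e = {J. J \<subseteq> \<Union>e \<and> (\<forall>I\<in>e. card (J \<inter> I) = 1)}"

definition JH :: "nat set set \<Rightarrow> nat set set set \<Rightarrow> nat set set" where
  "JH V E = (\<Union>e\<in>Lv V \<union> E. Jfam e)"

definition Eof :: "nat set set \<Rightarrow> nat set \<Rightarrow> nat set set" where
  "Eof V J = {I\<in>V. card (J \<inter> I) = 1}"

definition SH :: "nat set set \<Rightarrow> nat set set set \<Rightarrow> (nat set \<Rightarrow> real) set" where
  "SH V E = {w. (\<forall>J. J \<notin> JH V E \<longrightarrow> w J = 0) \<and>
      (\<forall>J\<in>JH V E. w J \<in> {0,1}) \<and>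
      (\<forall>I\<in>V. (\<Sum>i\<in>I. w {i}) = 1) \<and>
      (\<forall>J\<in>JH V E. card J > 1 \<longrightarrow> w J = (\<Prod>i\<in>J. w {i}))}"

definition MC :: "nat set set \<Rightarrow> nat set set set \<Rightarrow> (nat set \<Rightarrow> real) set" where
  "MC V E = conv_fun (SH V E)"

definition MLset :: "nat set set \<Rightarrow> nat set set set \<Rightarrow> (nat set set \<Rightarrow> real) set" where
  "MLset V E = {z. (\<forall>e. e \<notin> Lv V \<union> E \<longrightarrow> z e = 0) \<and>
      (\<forall>e\<in>Lv V \<union> E. z e \<in> {0,1}) \<and>
      (\<forall>e\<in>E. z e = (\<Prod>I\<in>e. z {I}))}"

definition MP :: "nat set set \<Rightarrow> nat set set set \<Rightarrow> (nat set set \<Rightarrow> real) set" where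
  "MP V E = conv_fun (MLset V E)"

end

theory Submission
  imports Defs
begin

lemma conv_funI:
  assumes "\<forall>i<k. 0 \<le> u i \<and> p i \<in> S" "(\<Sum>i<k. u i) = 1"
  shows "(\<lambda>j. \<Sum>i<(k::nat). u i * p i j) \<in> conv_fun S"
  unfolding conv_fun_def using assms by blast

lemma conv_funE:
  assumes "x \<in> conv_fun S"
  obtains k u p where "\<forall>i<(k::nat). 0 \<le> u i \<and> p i \<in> S" "(\<Sum>i<k. u i) = 1"
    "x = (\<lambda>j. \<Sum>i<k. u i * p i j)"
  using assms unfolding conv_fun_def mem_Collect_eq
  apply (elim exE conjE)
  apply (rule that)
    apply assumption+
  done

lemma conv_fun_image:
  assumes lin: "\<And>k u p. f (\<lambda>j. \<Sum>i<(k::nat). u i * p i j) = (\<lambda>e. \<Sum>i<k. u i * f (p i) e)"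
  shows "f ` conv_fun S = conv_fun (f ` S)"
proof
  show "f ` conv_fun S \<subseteq> conv_fun (f ` S)"
  proof
    fix y assume "y \<in> f ` conv_fun S"
    then obtain x where x: "x \<in> conv_fun S" and yx: "y = f x" by (rule imageE)
    from x obtain k u p where h: "\<forall>i<(k::nat). 0 \<le> u i \<and> p i \<in> S" "(\<Sum>i<k. u i) = 1"
      and xe: "x = (\<lambda>j. \<Sum>i<k. u i * p i j)" by (rule conv_funE)
    have y: "y = (\<lambda>e. \<Sum>i<k. u i * (f \<circ> p) i e)" unfolding yx xe o_def by (rule lin)
    have "\<forall>i<k. 0 \<le> u i \<and> (f \<circ> p) i \<in> f ` S" using h by auto
    from conv_funI[OF this h(2)] show "y \<in> conv_fun (f ` S)" unfolding y .
  qed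
next
  show "conv_fun (f ` S) \<subseteq> f ` conv_fun S"
  proof
    fix y assume "y \<in> conv_fun (f ` S)"
    then obtain k u q where h: "\<forall>i<(k::nat). 0 \<le> u i \<and> q i \<in> f ` S" "(\<Sum>i<k. u i) = 1"
      and y: "y = (\<lambda>j. \<Sum>i<k. u i * q i j)" by (rule conv_funE)
    define p where "p i = (SOME s. s \<in> S \<and> q i = f s)" for i
    have p: "p i \<in> S \<and> q i = f (p i)" if ik: "i < k" for i
    proof -
      from h(1) ik have "q i \<in> f ` S" by blast
      then have "\<exists>s. s \<in> S \<and> q i = f s" by blast
      then show ?thesis unfolding p_def by (rule someI_ex)
    qed
    have "f (\<lambda>j. \<Sum>i<k. u i * p i j) = (\<lambda>e. \<Sum>i<k. u i * f (p i) e)" by (rule lin)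
    also have "\<dots> = y" unfolding y using p by (intro ext sum.cong) auto
    finally have "y = f (\<lambda>j. \<Sum>i<k. u i * p i j)" by simp
    moreover have "(\<lambda>j. \<Sum>i<k. u i * p i j) \<in> conv_fun S"
      using h p by (intro conv_funI) auto
    ultimately show "y \<in> f ` conv_fun S" by blast
  qed
qed

lemma prod_01:
  assumes "\<forall>i\<in>J. (x i::real) \<in> {0,1}"
  shows "prod x J \<in> {0,1}"
proof (cases "finite J")
  case True
  show ?thesis
  proof (cases "\<exists>i\<in>J. x i = 0")
    case True
    then show ?thesis using \<open>finite J\<close> by auto
  next
    case False
    then have "\<forall>i\<in>J. x i = 1" using assms by auto
    then show ?thesis by simp
  qed
qed simp

theorem proposition2p1:
  fixes n :: nat and V :: "nat set set" and E :: "nat set set set"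
    and rep :: "nat set \<Rightarrow> nat"
  assumes "0 < n" and "partition_vertices n V"
    and "hyperedges_ok V E"
    and "\<forall>I\<in>V. rep I \<in> I"
  defines "R \<equiv> rep ` V"
  defines "JR \<equiv> {J \<in> JH V E. J \<subseteq> R}"
  defines "T \<equiv> (\<lambda>w::nat set \<Rightarrow> real. \<lambda>e::nat set set.
              if e \<in> Lv V \<union> E then w (inv_into JR (Eof V) e) else 0)"
  shows "bij_betw (Eof V) JR (Lv V \<union> E)
       \<and> (\<forall>w. \<forall>J\<in>JR. T w (Eof V J) = w J)
       \<and> bij_betw T (proj_on JR ` MC V E) (MP V E)"
proof -
  have UV: "\<Union>V = {1..n}" and disj0: "\<forall>I\<in>V. \<forall>I'\<in>V. I \<noteq> I' \<longrightarrow> I \<inter> I' = {}"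
    and card2: "\<forall>I\<in>V. 2 \<le> card I"
    using assms(2) unfolding partition_vertices_def by blast+
  have Eok: "\<forall>e\<in>E. e \<subseteq> V \<and> 2 \<le> card e" using assms(3) unfolding hyperedges_ok_def .
  have repI: "\<And>I. I \<in> V \<Longrightarrow> rep I \<in> I" using assms(4) by blast
  have disj: "I = I'" if "I \<in> V" "I' \<in> V" "x \<in> I" "x \<in> I'" for I I' x
    using disj0 that by blast
  have finI: "finite I" if "I \<in> V" for I using card2 that
    by (metis card.infinite not_numeral_le_zero)
  have finV: "finite V"
  proof -
    have "V \<subseteq> Pow {1..n}" using UV by blast
    then show ?thesis by (meson finite_Pow_iff finite_atLeastAtMost finite_subset)
  qed
  have repinj: "inj_on rep V" unfolding inj_on_def using repI disj by metis
  have RI: "J \<inter> I = (if rep I \<in> J then {rep I} else {})" if "J \<subseteq> R" "I \<in> V" for J I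
  proof -
    have "x = rep I" if "x \<in> J" "x \<in> I" for x
    proof -
      obtain I' where "I' \<in> V" "x = rep I'" using \<open>J \<subseteq> R\<close> \<open>x \<in> J\<close> unfolding R_def by blast
      then show ?thesis using disj[of I I' x] repI \<open>I \<in> V\<close> \<open>x \<in> I\<close> by auto
    qed
    note h = this
    show ?thesis
    proof (cases "rep I \<in> J")
      case True
      have "J \<inter> I = {rep I}" using h True repI[OF \<open>I \<in> V\<close>] by blast
      then show ?thesis using True by simp
    next
      case False
      have "J \<inter> I = {}" using h False by blast
      then show ?thesis using False by simp
    qed
  qed
  have EofR: "Eof V J = {I\<in>V. rep I \<in> J}" if "J \<subseteq> R" for J
  proof -
    have "card (J \<inter> I) = 1 \<longleftrightarrow> rep I \<in> J" if "I \<in> V" for I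
      using RI[OF \<open>J \<subseteq> R\<close> that] by simp
    then show ?thesis unfolding Eof_def by blast
  qed
  have JrepE: "J = rep ` Eof V J" if JR0: "J \<subseteq> R" for J
  proof
    show "J \<subseteq> rep ` Eof V J"
    proof
      fix x assume "x \<in> J"
      then obtain I where "I \<in> V" "x = rep I" using JR0 unfolding R_def by blast
      then show "x \<in> rep ` Eof V J" unfolding EofR[OF JR0] using \<open>x \<in> J\<close> by blast
    qed
    show "rep ` Eof V J \<subseteq> J" unfolding EofR[OF that] by blast
  qed
  have eV: "e \<subseteq> V" if "e \<in> Lv V \<union> E" for e
    using that Eok unfolding Lv_def by auto
  have repe_JR: "rep ` e \<in> JR" and Eof_repe: "Eof V (rep ` e) = e" if "e \<in> Lv V \<union> E" for e
  proof -
    have sub: "rep ` e \<subseteq> R" using eV[OF that] unfolding R_def by auto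
    have "rep ` e \<in> Jfam e"
      unfolding Jfam_def
    proof (intro CollectI conjI ballI)
      show "rep ` e \<subseteq> \<Union> e" using repI eV[OF that] by blast
      fix I assume "I \<in> e"
      then have "I \<in> V" "rep I \<in> rep ` e" using eV[OF that] by auto
      then have "rep ` e \<inter> I = {rep I}" using RI[OF sub, of I] by simp
      then show "card (rep ` e \<inter> I) = 1" by simp
    qed
    then have "rep ` e \<in> JH V E" unfolding JH_def using that by blast
    then show "rep ` e \<in> JR" unfolding JR_def using sub by blast
    have "{I \<in> V. rep I \<in> rep ` e} = e"
    proof
      show "e \<subseteq> {I \<in> V. rep I \<in> rep ` e}" using eV[OF that] by blast
      show "{I \<in> V. rep I \<in> rep ` e} \<subseteq> e"
      proof
        fix I assume "I \<in> {I \<in> V. rep I \<in> rep ` e}"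
        then obtain I' where "I \<in> V" "I' \<in> e" "rep I = rep I'" by blast
        then show "I \<in> e" using inj_onD[OF repinj, of I I'] eV[OF that] by auto
      qed
    qed
    then show "Eof V (rep ` e) = e" unfolding EofR[OF sub] .
  qed
  have EofJR: "Eof V J \<in> Lv V \<union> E" if "J \<in> JR" for J
  proof -
    from that obtain e where e: "e \<in> Lv V \<union> E" "J \<in> Jfam e" and sub: "J \<subseteq> R"
      unfolding JR_def JH_def by blast
    have "Eof V J = e"
    proof
      show "e \<subseteq> Eof V J" using e eV unfolding Jfam_def Eof_def by blast
      show "Eof V J \<subseteq> e"
      proof
        fix I assume "I \<in> Eof V J"
        then have I: "I \<in> V" "rep I \<in> J" using EofR[OF sub] by auto
        then obtain I' where "I' \<in> e" "rep I \<in> I'" using e(2) unfolding Jfam_def by blast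
        then show "I \<in> e" using disj[of I I' "rep I"] I repI eV[OF e(1)] by auto
      qed
    qed
    then show ?thesis using e by simp
  qed
  have bij: "bij_betw (Eof V) JR (Lv V \<union> E)"
    unfolding bij_betw_def
  proof
    show "inj_on (Eof V) JR"
    proof (rule inj_onI)
      fix J J' assume a: "J \<in> JR" "J' \<in> JR" "Eof V J = Eof V J'"
      have s1: "J \<subseteq> R" and s2: "J' \<subseteq> R" using a unfolding JR_def by blast+
      have e1: "J = rep ` Eof V J" by (rule JrepE[OF s1])
      have e2: "J' = rep ` Eof V J'" by (rule JrepE[OF s2])
      have "rep ` Eof V J = rep ` Eof V J'" using a(3) by (rule arg_cong)
      then show "J = J'" using e1 e2 by metis
    qed
    show "Eof V ` JR = Lv V \<union> E"
    proof
      show "Eof V ` JR \<subseteq> Lv V \<union> E" using EofJR by blast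
      show "Lv V \<union> E \<subseteq> Eof V ` JR"
      proof
        fix e assume "e \<in> Lv V \<union> E"
        then show "e \<in> Eof V ` JR"
          using repe_JR Eof_repe by (intro image_eqI[where x="rep ` e"]) auto
      qed
    qed
  qed
  have invE: "inv_into JR (Eof V) e = rep ` e" if "e \<in> Lv V \<union> E" for e
    using inv_into_f_eq[OF bij_betw_imp_inj_on[OF bij] repe_JR[OF that] Eof_repe[OF that]] .
  have Teq: "T w e = (if e \<in> Lv V \<union> E then w (rep ` e) else 0)" for w e
    unfolding T_def using invE by simp
  have part2: "\<forall>w. \<forall>J\<in>JR. T w (Eof V J) = w J"
  proof (intro allI ballI)
    fix w J assume "J \<in> JR"
    then have "J \<subseteq> R" unfolding JR_def by blast
    then have "rep ` Eof V J = J" by (rule sym[OF JrepE])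
    then show "T w (Eof V J) = w J" unfolding Teq using EofJR[OF \<open>J \<in> JR\<close>] by simp
  qed
  define G where "G = (\<lambda>w. T (proj_on JR w))"
  have Geq: "G w e = (if e \<in> Lv V \<union> E then w (rep ` e) else 0)" for w e
    unfolding G_def Teq proj_on_def using repe_JR by auto
  have Glin: "G (\<lambda>j. \<Sum>i<k. u i * p i j) = (\<lambda>e. \<Sum>i<k. u i * G (p i) e)" for k u p
    unfolding Geq by (rule ext) auto
  have GS: "G ` SH V E = MLset V E"
  proof
    show "G ` SH V E \<subseteq> MLset V E"
    proof
      fix z assume "z \<in> G ` SH V E"
      then obtain w where w: "w \<in> SH V E" and z: "z = G w" by blast
      have w0: "\<forall>J\<in>JH V E. w J \<in> {0,1}" and wp: "\<forall>J\<in>JH V E. card J > 1 \<longrightarrow> w J = (\<Prod>i\<in>J. w {i})"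
        using w unfolding SH_def by auto
      have JHe: "rep ` e \<in> JH V E" if "e \<in> Lv V \<union> E" for e using repe_JR[OF that] unfolding JR_def by auto
      show "z \<in> MLset V E" unfolding MLset_def
      proof (intro CollectI conjI allI ballI impI)
        show "z e = 0" if "e \<notin> Lv V \<union> E" for e using that z Geq by simp
        show "z e \<in> {0,1}" if "e \<in> Lv V \<union> E" for e using that z Geq w0 JHe by simp
        fix e assume eE: "e \<in> E"
        then have eLE: "e \<in> Lv V \<union> E" by simp
        have injE: "inj_on rep e" using repinj eV[OF eLE] inj_on_subset by blast
        have "card (rep ` e) = card e" using card_image[OF injE] .
        then have c: "card (rep ` e) > 1" using Eok eE by auto
        have "z e = w (rep ` e)" using z Geq eLE by simp
        also have "\<dots> = (\<Prod>i\<in>rep ` e. w {i})" using wp JHe[OF eLE] c by blast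
        also have "\<dots> = (\<Prod>I\<in>e. w {rep I})" using prod.reindex[OF injE] by simp
        also have "\<dots> = (\<Prod>I\<in>e. z {I})"
        proof (rule prod.cong[OF refl])
          fix I assume "I \<in> e"
          then have "{I} \<in> Lv V" using eV[OF eLE] unfolding Lv_def by auto
          then show "w {rep I} = z {I}" using z Geq by simp
        qed
        finally show "z e = (\<Prod>I\<in>e. z {I})" .
      qed
    qed
  next
    show "MLset V E \<subseteq> G ` SH V E"
    proof
      fix z assume z: "z \<in> MLset V E"
      have z0: "\<forall>e. e \<notin> Lv V \<union> E \<longrightarrow> z e = 0" and z01: "\<forall>e\<in>Lv V \<union> E. z e \<in> {0,1}"
        and zp: "\<forall>e\<in>E. z e = (\<Prod>I\<in>e. z {I})" using z unfolding MLset_def by auto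
      define other where "other I = (SOME i. i \<in> I \<and> i \<noteq> rep I)" for I
      have other: "other I \<in> I \<and> other I \<noteq> rep I" if "I \<in> V" for I
      proof -
        have "\<exists>i. i \<in> I \<and> i \<noteq> rep I"
        proof (rule ccontr)
          assume "\<not> ?thesis"
          then have "I \<subseteq> {rep I}" by blast
          then have "card I \<le> card {rep I}" by (intro card_mono) auto
          then have "card I \<le> 1" by simp
          then show False using card2 that by fastforce
        qed
        then show ?thesis unfolding other_def by (rule someI_ex)
      qed
      define ch where "ch I = (if z {I} = 1 then rep I else other I)" for I
      have chI: "ch I \<in> I" if "I \<in> V" for I using other[OF that] repI[OF that] unfolding ch_def by auto
      define x :: "nat \<Rightarrow> real" where "x i = (if \<exists>I\<in>V. i = ch I then 1 else 0)" for i
      have xI: "x i = (if i = ch I then 1 else 0)" if "I \<in> V" "i \<in> I" for I i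
        proof -
        have "(\<exists>I'\<in>V. i = ch I') \<longleftrightarrow> i = ch I"
        proof
          assume "\<exists>I'\<in>V. i = ch I'"
          then obtain I' where "I' \<in> V" "i = ch I'" by blast
          then show "i = ch I" using disj[of I I' i] chI that by auto
        qed (use that in blast)
        then show ?thesis unfolding x_def by simp
      qed
      define w where "w J = (if J \<in> JH V E then prod x J else 0)" for J
      have single: "{i} \<in> JH V E" if "I \<in> V" "i \<in> I" for I i
      proof -
        have "{I} \<in> Lv V" using that unfolding Lv_def by auto
        moreover have "{i} \<in> Jfam {I}" unfolding Jfam_def using that by auto
        ultimately show ?thesis unfolding JH_def by blast
      qed
      have JHsub: "J \<subseteq> \<Union>V" if "J \<in> JH V E" for J
        using that eV unfolding JH_def Jfam_def by blast
      have w_single: "w {i} = x i" if ws: "i \<in> J" "J \<in> JH V E" for i J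
      proof -
        obtain I where "I \<in> V" "i \<in> I" using JHsub[OF ws(2)] ws(1) by blast
        then show ?thesis unfolding w_def using single by simp
      qed
      have x01: "x i \<in> {0,1}" for i unfolding x_def by simp
      have wS: "w \<in> SH V E" unfolding SH_def
      proof (intro CollectI conjI allI ballI impI)
        show "w J = 0" if "J \<notin> JH V E" for J using that w_def by simp
        show "w J \<in> {0,1}" if "J \<in> JH V E" for J using that prod_01[of J x] x01 w_def by simp
        show "w J = (\<Prod>i\<in>J. w {i})" if "J \<in> JH V E" "1 < card J" for J
          using that w_single w_def by (auto intro: prod.cong)
        fix I assume I: "I \<in> V"
        have "(\<Sum>i\<in>I. w {i}) = (\<Sum>i\<in>I. if i = ch I then 1 else 0)"
          using I single xI w_def by (intro sum.cong) auto
        also have "\<dots> = 1" using finI[OF I] chI[OF I] by simp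
        finally show "(\<Sum>i\<in>I. w {i}) = 1" .
      qed
      have xrep: "x (rep I) = z {I}" if "I \<in> V" for I
      proof -
        have "{I} \<in> Lv V" using that unfolding Lv_def by auto
        then have "z {I} \<in> {0,1}" using z01 by auto
        then show ?thesis using xI[OF that repI[OF that]] other[OF that] unfolding ch_def by auto
      qed
      have "G w = z"
      proof
        fix e
        show "G w e = z e"
        proof (cases "e \<in> Lv V \<union> E")
          case False then show ?thesis using Geq z0 by simp
        next
          case True
          have JHe: "rep ` e \<in> JH V E" using repe_JR[OF True] unfolding JR_def by auto
          have injE: "inj_on rep e" using repinj eV[OF True] inj_on_subset by blast
          have "G w e = prod x (rep ` e)" using Geq True JHe w_def by simp
          also have "\<dots> = (\<Prod>I\<in>e. x (rep I))" using prod.reindex[OF injE] by simp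
          also have "\<dots> = (\<Prod>I\<in>e. z {I})" using xrep eV[OF True] by (intro prod.cong) auto
          also have "\<dots> = z e"
          proof (cases "e \<in> E")
            case True then show ?thesis using zp by simp
          next
            case False
            then obtain I where "e = {I}" using True unfolding Lv_def by auto
            then show ?thesis by simp
          qed
          finally show ?thesis .
        qed
      qed
      then show "z \<in> G ` SH V E" using wS by blast
    qed
  qed
  have img: "T ` (proj_on JR ` MC V E) = MP V E"
  proof -
    have "T ` (proj_on JR ` MC V E) = G ` MC V E" unfolding G_def by (simp add: image_image)
    also have "\<dots> = conv_fun (G ` SH V E)" unfolding MC_def by (rule conv_fun_image[OF Glin])
    finally show ?thesis unfolding GS MP_def .
  qed
  have injT: "inj_on T (proj_on JR ` MC V E)"
  proof (rule inj_onI)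
    fix a b assume a: "a \<in> proj_on JR ` MC V E" and b: "b \<in> proj_on JR ` MC V E" and ab: "T a = T b"
    have az: "a J = 0" if "J \<notin> JR" for J using a that unfolding proj_on_def by auto
    have bz: "b J = 0" if "J \<notin> JR" for J using b that unfolding proj_on_def by auto
    show "a = b"
    proof
      fix J show "a J = b J"
      proof (cases "J \<in> JR")
        case True
        then show ?thesis using part2 ab by metis
      qed (simp add: az bz)
    qed
  qed
  show ?thesis using bij part2 injT img unfolding bij_betw_def by blast
qed

end
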